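(* Let $\mathcal{C}$ be an $(n,k)$ linear code over $\mathrm{GF}(q^m)$ with rank weight distribution $A_0,\dots,A_n$, and let $d_{\mathrm{R}}'$ be the minimum rank distance of $\mathcal{C}^\perp$. If $\nu<d_{\mathrm{R}}'$ (with $0\le\nu\le n$), then $$\sum_{i=0}^{n-\nu}{n-i\brack\nu}A_i=q^{m(k-\nu)}{n\brack\nu}.$$
   Context: $q$ is a prime power. For $\mathbf{x}\in\mathrm{GF}(q^m)^n$, $\mathrm{rk}(\mathbf{x})$ is the dimension over $\mathrm{GF}(q)$ of the $\mathrm{GF}(q)$-span of its coordinates in $\mathrm{GF}(q^m)$; the rank distance is $d(\mathbf{x},\mathbf{y})=\mathrm{rk}(\mathbf{x}-\mathbf{y})$, and the minimum rank distance of a code is the minimum over pairs of distinct codewords. $A_i$ is the number of codewords of $\mathcal{C}$ of rank $i$. An $(n,k)$ linear code is a $k$-dimensional $\mathrm{GF}(q^m)$-subspace of $\mathrm{GF}(q^m)^n$; $\mathcal{C}^\perp=\{\mathbf{u}:\sum_iu_ic_i=0\ \forall\mathbf{c}\in\mathcal{C}\}$. Gaussian binomial: ${a\brack u}=\prod_{i=0}^{u-1}\frac{q^a-q^i}{q^u-q^i}$ for $0\le u\le a$ (equal to $1$ for $u=0$). *)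

theory Defs
  imports "HOL-Analysis.Analysis" "HOL-Computational_Algebra.Primes"
begin

text \<open>The ground field GF(q) inside the finite field 'a = GF(q^m):
  the set of elements fixed by the q-th power map.\<close>
definition subfield_q :: "nat \<Rightarrow> ('a::{field,finite}) set" where
  "subfield_q q = {y. y ^ q = y}"

text \<open>Rank of a vector: dimension over GF(q) of the GF(q)-span of its coordinates,
  i.e. the least number of elements of 'a whose GF(q)-linear combinations
  give all coordinates.\<close>
definition rk :: "nat \<Rightarrow> ('a::{field,finite}) ^ 'n \<Rightarrow> nat" where
  "rk q x = (LEAST r. \<exists>b :: nat \<Rightarrow> 'a. \<forall>i. \<exists>c :: nat \<Rightarrow> 'a.
      (\<forall>j. c j \<in> subfield_q q) \<and> x $ i = (\<Sum>j<r. c j * b j))"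

definition dual_code :: "('a::field ^ 'n) set \<Rightarrow> ('a ^ 'n) set" where
  "dual_code C = {u. \<forall>c\<in>C. (\<Sum>i\<in>UNIV. u $ i * c $ i) = 0}"

definition gauss_binom :: "nat \<Rightarrow> nat \<Rightarrow> nat \<Rightarrow> real" where
  "gauss_binom q a u = (\<Prod>i<u. (real q ^ a - real q ^ i) / (real q ^ u - real q ^ i))"

definition rank_weight_count :: "nat \<Rightarrow> ('a::{field,finite} ^ 'n) set \<Rightarrow> nat \<Rightarrow> nat" where
  "rank_weight_count q C i = card {c \<in> C. rk q c = i}"

end

theory Submission
  imports Defs "HOL-Computational_Algebra.Polynomial" "HOL-Library.Function_Algebras"
begin
lemma char_facts:
  assumes p: "prime p" and e: "e > 0" and cq: "CARD('a::{field,finite}) = (p^e)^m"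
  shows "CHAR('a) = p" "m > 0"
proof -
  have c2: "CARD('a) \<ge> 2"
  proof -
    have "{0::'a, 1} \<subseteq> UNIV" by auto
    hence "card {0::'a,1} \<le> CARD('a)" by (intro card_mono) auto
    thus ?thesis by simp
  qed
  show m: "m > 0" using c2 cq by (cases m) auto
  have pos: "CHAR('a) > 0" by (rule finite_imp_CHAR_pos) simp
  have pr: "prime CHAR('a)" using pos prime_CHAR_semidom by blast
  have "(\<Sum>y\<in>UNIV. y + (1::'a)) = (\<Sum>y\<in>UNIV. y)"
    by (rule sum.reindex_bij_witness[of _ "\<lambda>y. y - 1" "\<lambda>y. y + 1"]) auto
  hence "of_nat CARD('a) = (0::'a)" by (simp add: sum.distrib)
  hence "CHAR('a) dvd CARD('a)" by (simp add: of_nat_eq_0_iff_char_dvd)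
  hence "CHAR('a) dvd p ^ (e*m)" using cq by (simp add: power_mult)
  hence "CHAR('a) dvd p" using pr prime_dvd_power by blast
  thus "CHAR('a) = p" using pr p by (simp add: primes_dvd_imp_eq)
qed

lemma frob_add:
  assumes p: "prime p" and e: "e > 0" and cq: "CARD('a::{field,finite}) = (p^e)^m"
  shows "((x::'a) + y)^(p^e) = x^(p^e) + y^(p^e)"
proof -
  have "CHAR('a) = p" using char_facts[OF assms] by simp
  thus ?thesis using p by (intro freshmans_dream') auto
qed

lemma zf: "(0::nat\<Rightarrow>'a::field) = (\<lambda>i. 0)" by auto

lemma geom_nat: "((q::nat) - 1) * (\<Sum>i<m. q^i) = q^m - 1"
proof (cases "q = 0")
  case True thus ?thesis by (cases m) auto
next
  case False
  have "int ((q - 1) * (\<Sum>i<m. q^i)) = (int q - 1) * (\<Sum>i<m. int q^i)"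
    using False by (simp add: of_nat_diff)
  also have "\<dots> = int q ^ m - 1" by (induction m) (auto simp: algebra_simps)
  also have "\<dots> = int (q^m - 1)" using False by (simp add: of_nat_diff)
  finally show ?thesis by linarith
qed

lemma finite_field_pow_card1:
  fixes x :: "'a::{field,finite}"
  assumes "x \<noteq> 0"
  shows "x ^ (CARD('a) - 1) = 1"
proof -
  have fin: "finite (UNIV - {0::'a})" by simp
  have cG: "card (UNIV - {0::'a}) = CARD('a) - 1" by (simp add: card_Diff_singleton)
  have "(\<Prod>y\<in>UNIV-{0}. x * y) = (\<Prod>y\<in>UNIV-{0::'a}. y)"
    by (rule prod.reindex_bij_witness[of _ "\<lambda>y. y / x" "\<lambda>y. x * y"]) (use assms in auto)
  moreover have "(\<Prod>y\<in>UNIV-{0}. x * y) = x ^ (CARD('a) - 1) * (\<Prod>y\<in>UNIV-{0::'a}. y)"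
    by (simp add: prod.distrib cG)
  moreover have "(\<Prod>y\<in>UNIV-{0::'a}. y) \<noteq> 0" by (simp add: prod_zero_iff)
  ultimately show ?thesis by simp
qed

lemma card_roots_monom:
  fixes z :: "'a::field"
  assumes "d > 0"
  shows "card {x. x ^ d = z} \<le> d"
proof -
  define P where "P = monom (1::'a) d - [:z:]"
  have deg: "degree P = d" unfolding P_def using assms
    by (simp only: diff_conv_add_uminus, subst degree_add_eq_left) (auto simp: degree_monom_eq)
  hence "P \<noteq> 0" using assms by auto
  moreover have "{x. x ^ d = z} = {x. poly P x = 0}" by (auto simp: P_def poly_monom)
  ultimately show ?thesis using card_poly_roots_bound[of P] deg by simp
qed

lemma subfield_card:
  assumes p: "prime p" and e: "e > 0" and q: "q = p^e" and cq: "CARD('a::{field,finite}) = q^m"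
  shows "card (subfield_q q :: 'a set) = q"
proof -
  have q2: "q \<ge> 2"
  proof -
    have "p ^ 1 \<le> p ^ e" using e prime_gt_0_nat[OF p] by (intro power_increasing) auto
    thus ?thesis using prime_ge_2_nat[OF p] q by simp
  qed
  have m: "m > 0" using char_facts[where 'a='a, of p e m] p e q cq by auto
  let ?F = "subfield_q q :: 'a set"
  have le: "card ?F \<le> q"
  proof -
    have "?F = {x. x ^ q = x}" by (simp add: subfield_q_def)
    also have "\<dots> = {x. x ^ q - x = 0}" by auto
    finally have "?F = {x. poly (monom 1 q - [:0,1:]) x = 0}" by (simp add: poly_monom)
    moreover have "degree (monom (1::'a) q - [:0,1:]) = q" using q2
      by (simp only: diff_conv_add_uminus, subst degree_add_eq_left) (auto simp: degree_monom_eq)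
    moreover have "monom (1::'a) q - [:0,1:] \<noteq> 0"
      using calculation(2) q2 by (metis degree_0 not_numeral_le_zero)
    ultimately show ?thesis using card_poly_roots_bound[of "monom (1::'a) q - [:0,1:]"] by simp
  qed
  define T where "T = (\<Sum>i<m. q^i)"
  have T: "(q - 1) * T = q^m - 1" unfolding T_def by (rule geom_nat)
  have Tpos: "T > 0"
  proof -
    have "q^0 \<le> T" unfolding T_def using m by (intro member_le_sum) auto
    thus ?thesis by simp
  qed
  define G where "G = UNIV - {0::'a}"
  define h where "h = (\<lambda>x::'a. x ^ (q - 1))"
  define K where "K = {x\<in>G. h x = 1}"
  have finG: "finite G" by (simp add: G_def)
  have cG: "card G = q^m - 1" by (simp add: G_def card_Diff_singleton cq)
  have imT: "card (h ` G) \<le> T"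
  proof -
    have "h ` G \<subseteq> {z. z ^ T = 1}"
    proof
      fix z assume "z \<in> h ` G"
      then obtain x where x: "x \<in> G" "z = h x" by auto
      have "z ^ T = x ^ ((q - 1) * T)" by (simp add: x h_def power_mult)
      also have "\<dots> = 1" using finite_field_pow_card1[of x] x T by (simp add: cq G_def)
      finally show "z \<in> {z. z ^ T = 1}" by simp
    qed
    moreover have "finite {z::'a. z ^ T = 1}" by simp
    ultimately have "card (h ` G) \<le> card {z::'a. z ^ T = 1}" by (rule card_mono[rotated])
    also have "\<dots> \<le> T" using card_roots_monom[OF Tpos, of "1::'a"] by simp
    finally show ?thesis .
  qed
  have fib: "card {x\<in>G. h x = z} \<le> card K" if z: "z \<in> h ` G" for z
  proof -
    obtain x0 where x0: "x0 \<in> G" "z = h x0" using z by auto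
    have "inj_on (\<lambda>x. x / x0) {x\<in>G. h x = z}" using x0 by (auto simp: G_def inj_on_def)
    moreover have "(\<lambda>x. x / x0) ` {x\<in>G. h x = z} \<subseteq> K"
      using x0 by (auto simp: G_def K_def h_def power_divide)
    ultimately show ?thesis by (intro card_inj_on_le) (auto simp: K_def G_def)
  qed
  have "(\<Sum>z\<in>h ` G. \<Sum>x\<in>{x\<in>G. h x = z}. 1::nat) = (\<Sum>x\<in>G. 1)"
    by (rule sum.group) (auto simp: finG)
  hence "card G = (\<Sum>z\<in>h ` G. card {x\<in>G. h x = z})" by simp
  also have "\<dots> \<le> (\<Sum>z\<in>h ` G. card K)" by (intro sum_mono fib)
  also have "\<dots> \<le> T * card K" using imT by simp
  finally have "(q - 1) * T \<le> T * card K" using cG T by simp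
  hence qK: "q - 1 \<le> card K" using Tpos by (simp add: mult.commute)
  have "insert 0 K \<subseteq> ?F"
  proof
    fix x assume "x \<in> insert 0 K"
    then show "x \<in> ?F"
    proof
      assume "x = 0" thus ?thesis using q2 by (simp add: subfield_q_def)
    next
      assume "x \<in> K"
      hence "x ^ (q - 1) = 1" by (simp add: K_def h_def)
      hence "x ^ Suc (q - 1) = x" by simp
      thus ?thesis using q2 by (simp add: subfield_q_def)
    qed
  qed
  hence "card (insert 0 K) \<le> card ?F" by (intro card_mono) auto
  moreover have "card (insert 0 K) = Suc (card K)" using finG by (simp add: K_def G_def)
  ultimately show ?thesis using le qK q2 by linarith
qed

locale fsp = module scale for scale :: "'a::field \<Rightarrow> 'b::ab_group_add \<Rightarrow> 'b" +
  fixes F :: "'a set"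
  assumes F0: "0 \<in> F" and F1: "1 \<in> F"
    and Fadd: "a \<in> F \<Longrightarrow> b \<in> F \<Longrightarrow> a + b \<in> F"
    and Fmul: "a \<in> F \<Longrightarrow> b \<in> F \<Longrightarrow> a * b \<in> F"
    and Fneg: "a \<in> F \<Longrightarrow> - a \<in> F"
    and Finv: "a \<in> F \<Longrightarrow> inverse a \<in> F"
    and Ffin: "finite F"
begin

definition lc :: "(nat \<Rightarrow> 'a) \<Rightarrow> (nat \<Rightarrow> 'b) \<Rightarrow> nat \<Rightarrow> 'b" where
  "lc c t j = (\<Sum>i<j. scale (c i) (t i))"

definition spn :: "(nat \<Rightarrow> 'b) \<Rightarrow> nat \<Rightarrow> 'b set" where
  "spn t j = {x. \<exists>c. (\<forall>i<j. c i \<in> F) \<and> x = lc c t j}"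

definition ind :: "(nat \<Rightarrow> 'b) \<Rightarrow> nat \<Rightarrow> bool" where
  "ind t j \<longleftrightarrow> (\<forall>c. (\<forall>i<j. c i \<in> F) \<longrightarrow> lc c t j = 0 \<longrightarrow> (\<forall>i<j. c i = 0))"

definition subsp :: "'b set \<Rightarrow> bool" where
  "subsp S \<longleftrightarrow> 0 \<in> S \<and> (\<forall>x\<in>S. \<forall>y\<in>S. x + y \<in> S) \<and> (\<forall>a\<in>F. \<forall>x\<in>S. scale a x \<in> S)"

lemma Fdiff: "a \<in> F \<Longrightarrow> b \<in> F \<Longrightarrow> a - b \<in> F"
  using Fadd Fneg by (metis diff_conv_add_uminus)

lemma indD: "ind t j \<Longrightarrow> (\<forall>i<j. c i \<in> F) \<Longrightarrow> lc c t j = 0 \<Longrightarrow> i < j \<Longrightarrow> c i = 0"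
  unfolding ind_def by blast

lemma spnI: "(\<forall>i<j. c i \<in> F) \<Longrightarrow> x = lc c t j \<Longrightarrow> x \<in> spn t j"
  unfolding spn_def by blast

lemma lc_cong: "(\<And>i. i < j \<Longrightarrow> c i = c' i) \<Longrightarrow> (\<And>i. i < j \<Longrightarrow> t i = t' i) \<Longrightarrow> lc c t j = lc c' t' j"
  unfolding lc_def by (intro sum.cong) auto

lemma lc_Suc: "lc c t (Suc j) = lc c t j + scale (c j) (t j)"
  by (simp add: lc_def)

lemma lc_0[simp]: "lc c t 0 = 0" by (simp add: lc_def)

lemma lc_diff: "lc (\<lambda>i. c i - d i) t j = lc c t j - lc d t j"
  unfolding lc_def by (simp only: scale_left_diff_distrib sum_subtractf)

lemma lc_add: "lc (\<lambda>i. c i + d i) t j = lc c t j + lc d t j"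
  unfolding lc_def by (simp only: scale_left_distrib sum.distrib)

lemma lc_scale: "scale a (lc c t j) = lc (\<lambda>i. a * c i) t j"
  by (simp add: lc_def scale_sum_right)

lemma lc_zero: "lc (\<lambda>i. 0) t j = 0"
  by (simp add: lc_def)

lemma spn_image: "spn t j = (\<lambda>c. lc c t j) ` PiE {..<j} (\<lambda>_. F)"
proof
  show "spn t j \<subseteq> (\<lambda>c. lc c t j) ` PiE {..<j} (\<lambda>_. F)"
  proof
    fix x assume "x \<in> spn t j"
    then obtain c where c: "\<forall>i<j. c i \<in> F" "x = lc c t j" by (auto simp: spn_def)
    have "restrict c {..<j} \<in> PiE {..<j} (\<lambda>_. F)" using c by auto
    moreover have "lc (restrict c {..<j}) t j = x" using c by (auto intro: lc_cong)
    ultimately show "x \<in> (\<lambda>c. lc c t j) ` PiE {..<j} (\<lambda>_. F)" by force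
  qed
next
  show "(\<lambda>c. lc c t j) ` PiE {..<j} (\<lambda>_. F) \<subseteq> spn t j"
  proof
    fix x assume "x \<in> (\<lambda>c. lc c t j) ` PiE {..<j} (\<lambda>_. F)"
    then obtain c where c: "c \<in> PiE {..<j} (\<lambda>_. F)" "x = lc c t j" by blast
    have "\<forall>i<j. c i \<in> F" using c(1) by (auto dest: PiE_mem)
    thus "x \<in> spn t j" using c(2) unfolding spn_def by blast
  qed
qed

lemma finite_spn: "finite (spn t j)"
  unfolding spn_image by (rule finite_imageI, rule finite_PiE) (auto simp: Ffin)

lemma card_spn_le: "card (spn t j) \<le> card F ^ j"
proof -
  have "card (spn t j) \<le> card (PiE {..<j} (\<lambda>_. F))"
    unfolding spn_image by (rule card_image_le, rule finite_PiE) (auto simp: Ffin)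
  also have "\<dots> = card F ^ j" using card_PiE[of "{..<j}" "\<lambda>_. F"] by simp
  finally show ?thesis .
qed

lemma card_spn_ind: assumes "ind t j" shows "card (spn t j) = card F ^ j"
proof -
  have "inj_on (\<lambda>c. lc c t j) (PiE {..<j} (\<lambda>_. F))"
  proof (rule inj_onI)
    fix c d assume c: "c \<in> PiE {..<j} (\<lambda>_. F)" and d: "d \<in> PiE {..<j} (\<lambda>_. F)"
      and eq: "lc c t j = lc d t j"
    have z: "lc (\<lambda>i. c i - d i) t j = 0" unfolding lc_diff eq by simp
    have "\<forall>i<j. c i - d i \<in> F"
    proof (intro allI impI)
      fix i assume "i < j"
      hence "c i \<in> F" "d i \<in> F" using PiE_mem[OF c] PiE_mem[OF d] by auto
      thus "c i - d i \<in> F" by (rule Fdiff)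
    qed
    hence "\<forall>i<j. c i - d i = 0" using indD[OF assms _ z] by blast
    hence "\<And>i. i \<in> {..<j} \<Longrightarrow> c i = d i" by simp
    thus "c = d" by (rule PiE_ext[OF c d])
  qed
  hence "card (spn t j) = card (PiE {..<j} (\<lambda>_. F))" unfolding spn_image by (rule card_image)
  also have "\<dots> = card F ^ j" using card_PiE[of "{..<j}" "\<lambda>_. F"] by simp
  finally show ?thesis .
qed

lemma subsp_lc: assumes "subsp S" "\<forall>i<j. t i \<in> S" "\<forall>i<j. c i \<in> F" shows "lc c t j \<in> S"
  using assms
proof (induction j)
  case 0 thus ?case by (simp add: subsp_def)
next
  case (Suc j)
  have a: "lc c t j \<in> S" using Suc by auto
  have b: "scale (c j) (t j) \<in> S" using Suc.prems unfolding subsp_def by auto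
  show ?case using a b Suc.prems(1) unfolding lc_Suc subsp_def by blast
qed

lemma spn_subset: "subsp S \<Longrightarrow> \<forall>i<j. t i \<in> S \<Longrightarrow> spn t j \<subseteq> S"
  using subsp_lc by (auto simp: spn_def)

lemma subsp_spn: "subsp (spn t j)"
  unfolding subsp_def
proof (intro conjI ballI)
  show "0 \<in> spn t j" unfolding spn_def by (intro CollectI exI[of _ "\<lambda>_. 0"]) (simp add: lc_zero F0)
next
  fix x y assume "x \<in> spn t j" "y \<in> spn t j"
  then obtain c d where "\<forall>i<j. c i \<in> F" "x = lc c t j" "\<forall>i<j. d i \<in> F" "y = lc d t j"
    by (auto simp: spn_def)
  thus "x + y \<in> spn t j" unfolding spn_def
    by (intro CollectI exI[of _ "\<lambda>i. c i + d i"]) (auto simp: lc_add Fadd)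
next
  fix a x assume "a \<in> F" "x \<in> spn t j"
  then obtain c where "\<forall>i<j. c i \<in> F" "x = lc c t j" by (auto simp: spn_def)
  thus "scale a x \<in> spn t j" unfolding spn_def using \<open>a \<in> F\<close>
    by (intro CollectI exI[of _ "\<lambda>i. a * c i"]) (auto simp: lc_scale Fmul)
qed

lemma lc_delta: assumes "i < j" shows "lc (\<lambda>l. if l = i then 1 else 0) t j = t i"
proof -
  have "lc (\<lambda>l. if l = i then 1 else 0) t j = (\<Sum>l<j. if l = i then t l else 0)"
    unfolding lc_def by (intro sum.cong) auto
  also have "\<dots> = t i" using assms by (simp add: sum.delta)
  finally show ?thesis .
qed

lemma t_in_spn: assumes "i < j" shows "t i \<in> spn t j"
proof -
  have "lc (\<lambda>l. if l = i then 1 else 0) t j = t i" using assms by (rule lc_delta)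
  thus ?thesis unfolding spn_def using F0 F1
    by (intro CollectI exI[of _ "\<lambda>l. if l = i then 1 else 0"]) auto
qed

lemma ind_ext: assumes "ind t j" "x \<notin> spn t j" shows "ind (t(j:=x)) (Suc j)"
  unfolding ind_def
proof (rule allI, intro impI)
  fix c assume cF: "\<forall>i<Suc j. c i \<in> F" and z: "lc c (t(j := x)) (Suc j) = 0"
  have cF': "\<forall>i<j. c i \<in> F" using cF by auto
  have lct: "lc c (t(j := x)) j = lc c t j" by (rule lc_cong) auto
  have z': "lc c t j + scale (c j) x = 0" using z by (simp add: lc_Suc lct)
  have cj: "c j = 0"
  proof (rule ccontr)
    assume ne: "c j \<noteq> 0"
    have "x = scale (- inverse (c j)) (lc c t j)"
    proof -
      have "lc c t j = - scale (c j) x" using z' by (simp add: eq_neg_iff_add_eq_0)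
      hence "scale (- inverse (c j)) (lc c t j) = scale (- inverse (c j)) (- scale (c j) x)"
        by simp
      also have "\<dots> = scale (inverse (c j) * c j) x"
        by (simp only: scale_minus_right scale_scale scale_minus_left[symmetric] mult_minus_left mult_minus_right minus_minus)
      also have "\<dots> = x" using ne by simp
      finally show ?thesis by simp
    qed
    also have "\<dots> = lc (\<lambda>i. - inverse (c j) * c i) t j" by (rule lc_scale)
    finally have xe: "x = lc (\<lambda>i. - inverse (c j) * c i) t j" .
    have "\<forall>i<j. - inverse (c j) * c i \<in> F"
    proof (intro allI impI)
      fix i assume "i < j"
      have "c j \<in> F" using cF by simp
      hence "- inverse (c j) \<in> F" by (intro Fneg Finv)
      moreover have "c i \<in> F" using cF \<open>i < j\<close> by simp
      ultimately show "- inverse (c j) * c i \<in> F" by (rule Fmul)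
    qed
    hence "x \<in> spn t j" by (rule spnI[OF _ xe])
    thus False using assms(2) by simp
  qed
  have l0: "lc c t j = 0" using z' cj by simp
  have "\<forall>i<j. c i = 0" using indD[OF assms(1) cF' l0] by blast
  thus "\<forall>i<Suc j. c i = 0" using cj less_Suc_eq by auto
qed

lemma ind_ext_rev: assumes "ind (t(j:=x)) (Suc j)" shows "ind t j" "x \<notin> spn t j"
proof -
  show "ind t j" unfolding ind_def
  proof (rule allI, intro impI)
    fix c assume cF: "\<forall>i<j. c i \<in> F" and z: "lc c t j = 0"
    have e1: "lc (c(j:=0)) (t(j:=x)) j = lc c t j" by (rule lc_cong) auto
    have e2: "lc (c(j:=0)) (t(j:=x)) (Suc j) = 0" using e1 z by (simp add: lc_Suc)
    have cF2: "\<forall>i<Suc j. (c(j:=0)) i \<in> F" using cF F0 by (auto simp: less_Suc_eq)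
    show "\<forall>i<j. c i = 0"
    proof (intro allI impI)
      fix i assume "i < j"
      hence "(c(j:=0)) i = 0" using indD[OF assms cF2 e2, of i] by simp
      thus "c i = 0" using \<open>i < j\<close> by simp
    qed
  qed
  show "x \<notin> spn t j"
  proof
    assume "x \<in> spn t j"
    then obtain c where cF: "\<forall>i<j. c i \<in> F" and xc: "x = lc c t j" by (auto simp: spn_def)
    have e1: "lc (c(j:=-1)) (t(j:=x)) j = lc c t j" by (rule lc_cong) auto
    have e2: "lc (c(j:=-1)) (t(j:=x)) (Suc j) = 0" using e1 xc by (simp add: lc_Suc)
    have cF2: "\<forall>i<Suc j. (c(j:=-1)) i \<in> F" using cF F1 Fneg by (auto simp: less_Suc_eq)
    have "(c(j:=-1)) j = 0" using indD[OF assms cF2 e2, of j] by simp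
    thus False by simp
  qed
qed

lemma basis_exists:
  assumes S: "subsp S" "finite S"
  shows "\<exists>t j. (\<forall>i<j. t i \<in> S) \<and> ind t j \<and> spn t j = S"
proof -
  define P where "P = (\<lambda>j. \<exists>t. (\<forall>i<j. t i \<in> S) \<and> ind t j)"
  have P0: "P 0" unfolding P_def ind_def by simp
  have F2: "2 \<le> card F"
  proof -
    have "card {0::'a, 1} \<le> card F" using F0 F1 Ffin by (intro card_mono) auto
    thus ?thesis by simp
  qed
  have bnd: "\<forall>j. P j \<longrightarrow> j \<le> card S"
  proof (intro allI impI)
    fix j assume "P j"
    then obtain t where t: "\<forall>i<j. t i \<in> S" "ind t j" unfolding P_def by blast
    have "j < 2 ^ j" by (rule less_exp)
    also have "\<dots> \<le> card F ^ j" using F2 by (rule power_mono) simp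
    also have "\<dots> = card (spn t j)" using card_spn_ind[OF t(2)] by simp
    also have "\<dots> \<le> card S" using spn_subset[OF S(1) t(1)] S(2) by (rule card_mono[rotated])
    finally show "j \<le> card S" by simp
  qed
  define j where "j = (GREATEST j. P j)"
  have Pj: "P j" unfolding j_def by (rule GreatestI_nat[where P=P, OF P0]) (use bnd in blast)
  then obtain t where t: "\<forall>i<j. t i \<in> S" "ind t j" unfolding P_def by blast
  have "spn t j = S"
  proof (rule ccontr)
    assume "spn t j \<noteq> S"
    then obtain x where x: "x \<in> S" "x \<notin> spn t j" using spn_subset[OF S(1) t(1)] by blast
    have "P (Suc j)" unfolding P_def
      by (intro exI[of _ "t(j:=x)"] conjI ind_ext[OF t(2) x(2)]) (use t(1) x(1) in \<open>auto simp: less_Suc_eq\<close>)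
    hence "Suc j \<le> j" unfolding j_def by (rule Greatest_le_nat[where P=P]) (use bnd in blast)
    thus False by simp
  qed
  thus ?thesis using t by blast
qed

lemma card_subsp:
  assumes "subsp S" "finite S"
  shows "\<exists>d. card S = card F ^ d"
  using basis_exists[OF assms] card_spn_ind by metis

lemma count_ind:
  assumes S: "subsp S" "finite S" and cS: "card S = card F ^ d"
  shows "card {t \<in> PiE {..<j} (\<lambda>_. S). ind t j} = (\<Prod>i<j. card F ^ d - card F ^ i)"
proof (induction j)
  case 0
  have "{t \<in> PiE {..<0::nat} (\<lambda>_. S). ind t 0} = {\<lambda>_. undefined}"
    by (auto simp: ind_def)
  thus ?case by simp
next
  case (Suc j)
  define A where "A = {t \<in> PiE {..<j} (\<lambda>_. S). ind t j}"
  have "finite (PiE {..<j} (\<lambda>_. S))" by (rule finite_PiE) (auto simp: S(2))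
  hence finA: "finite A" unfolding A_def by (rule finite_subset[rotated]) auto
  have eq: "{t \<in> PiE {..<Suc j} (\<lambda>_. S). ind t (Suc j)} = (\<lambda>(t,x). t(j:=x)) ` Sigma A (\<lambda>t. S - spn t j)"
  proof
    show "{t \<in> PiE {..<Suc j} (\<lambda>_. S). ind t (Suc j)} \<subseteq> (\<lambda>(t,x). t(j:=x)) ` Sigma A (\<lambda>t. S - spn t j)"
    proof
      fix s assume s: "s \<in> {t \<in> PiE {..<Suc j} (\<lambda>_. S). ind t (Suc j)}"
      define t where "t = s(j:=undefined)"
      have st: "s = t(j := s j)" unfolding t_def by simp
      have "ind (t(j := s j)) (Suc j)" using s st by simp
      note r = ind_ext_rev[OF this]
      have "t \<in> PiE {..<j} (\<lambda>_. S)" using s unfolding t_def by (auto simp: PiE_iff extensional_def)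
      hence "t \<in> A" using r(1) unfolding A_def by simp
      moreover have "s j \<in> S" using s by (auto simp: PiE_iff)
      ultimately have mem: "(t, s j) \<in> Sigma A (\<lambda>t. S - spn t j)" using r(2) by simp
      show "s \<in> (\<lambda>(t,x). t(j:=x)) ` Sigma A (\<lambda>t. S - spn t j)"
        by (rule image_eqI[OF _ mem]) (subst case_prod_conv, rule st)
    qed
  next
    show "(\<lambda>(t,x). t(j:=x)) ` Sigma A (\<lambda>t. S - spn t j) \<subseteq> {t \<in> PiE {..<Suc j} (\<lambda>_. S). ind t (Suc j)}"
    proof
      fix s assume "s \<in> (\<lambda>(t,x). t(j:=x)) ` Sigma A (\<lambda>t. S - spn t j)"
      then obtain t x where tx: "t \<in> A" "x \<in> S" "x \<notin> spn t j" "s = t(j:=x)" by auto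
      have "s \<in> PiE {..<Suc j} (\<lambda>_. S)" using tx unfolding A_def by (auto simp: PiE_iff extensional_def)
      moreover have "ind s (Suc j)" using tx ind_ext[of t j x] unfolding A_def by simp
      ultimately show "s \<in> {t \<in> PiE {..<Suc j} (\<lambda>_. S). ind t (Suc j)}" by simp
    qed
  qed
  have inj: "inj_on (\<lambda>(t,x). t(j:=x)) (Sigma A (\<lambda>t. S - spn t j))"
  proof (rule inj_onI)
    fix a b assume a: "a \<in> Sigma A (\<lambda>t. S - spn t j)" and b: "b \<in> Sigma A (\<lambda>t. S - spn t j)"
      and e: "(\<lambda>(t,x). t(j:=x)) a = (\<lambda>(t,x). t(j:=x)) b"
    obtain t x where a': "a = (t,x)" by fastforce
    obtain t' x' where b': "b = (t',x')" by fastforce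
    have tA: "t \<in> PiE {..<j} (\<lambda>_. S)" "t' \<in> PiE {..<j} (\<lambda>_. S)" using a b a' b' unfolding A_def by auto
    have e': "t(j:=x) = t'(j:=x')" using e a' b' by simp
    have "x = x'" using fun_cong[OF e', of j] by simp
    moreover have "t = t'"
    proof
      fix i show "t i = t' i"
      proof (cases "i = j")
        case True thus ?thesis using tA by (simp add: PiE_iff extensional_def)
      next
        case False thus ?thesis using fun_cong[OF e', of i] by simp
      qed
    qed
    ultimately show "a = b" using a' b' by simp
  qed
  have "card {t \<in> PiE {..<Suc j} (\<lambda>_. S). ind t (Suc j)} = card (Sigma A (\<lambda>t. S - spn t j))"
    unfolding eq by (rule card_image[OF inj])
  also have "\<dots> = (\<Sum>t\<in>A. card (S - spn t j))" using finA S(2) by (subst card_SigmaI) (auto simp: finite_spn)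
  also have "\<dots> = (\<Sum>t\<in>A. card F ^ d - card F ^ j)"
  proof (rule sum.cong[OF refl])
    fix t assume "t \<in> A"
    hence t: "\<forall>i<j. t i \<in> S" "ind t j" unfolding A_def by (auto simp: PiE_iff)
    have "card (S - spn t j) = card S - card (spn t j)"
      using spn_subset[OF S(1) t(1)] S(2) by (intro card_Diff_subset finite_spn)
    thus "card (S - spn t j) = card F ^ d - card F ^ j" using cS card_spn_ind[OF t(2)] by simp
  qed
  also have "\<dots> = card A * (card F ^ d - card F ^ j)" by simp
  also have "card A = (\<Prod>i<j. card F ^ d - card F ^ i)" using Suc unfolding A_def by simp
  finally show ?case by simp
qed

end

definition dotp :: "'a::field^'n \<Rightarrow> 'a^'n \<Rightarrow> 'a" where
  "dotp a x = (\<Sum>l\<in>UNIV. a$l * x$l)"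

definition Fn :: "'a::field set \<Rightarrow> ('a^'n) set" where
  "Fn F = {a. \<forall>l. a$l \<in> F}"

lemma card_hom:
  fixes f :: "'b::ab_group_add \<Rightarrow> 'c::ab_group_add"
  assumes fin: "finite A" and add: "\<And>a b. a \<in> A \<Longrightarrow> b \<in> A \<Longrightarrow> a + b \<in> A"
    and diff: "\<And>a b. a \<in> A \<Longrightarrow> b \<in> A \<Longrightarrow> a - b \<in> A"
    and hom: "\<And>a b. a \<in> A \<Longrightarrow> b \<in> A \<Longrightarrow> f (a - b) = f a - f b"
  shows "card A = card (f ` A) * card {a\<in>A. f a = 0}"
proof -
  let ?K = "{a\<in>A. f a = 0}"
  have fib: "card {a\<in>A. f a = y} = card ?K" if y: "y \<in> f ` A" for y
  proof -
    obtain a0 where a0: "a0 \<in> A" "y = f a0" using y by auto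
    have hadd: "f (a + a0) = f a + f a0" if "a \<in> A" for a
    proof -
      have "a + a0 - a0 \<in> A" using add[OF that a0(1)] a0(1) diff by blast
      have "f (a + a0 - a0) = f (a + a0) - f a0" using hom add[OF that a0(1)] a0(1) by blast
      thus ?thesis by (simp add: algebra_simps)
    qed
    show ?thesis
    proof (rule card_bij_eq[of "\<lambda>a. a - a0" _ _ "\<lambda>a. a + a0"])
      show "inj_on (\<lambda>a. a - a0) {a\<in>A. f a = y}" by (auto simp: inj_on_def)
      show "inj_on (\<lambda>a. a + a0) ?K" by (auto simp: inj_on_def)
      show "(\<lambda>a. a - a0) ` {a\<in>A. f a = y} \<subseteq> ?K" using a0 diff hom by auto
      show "(\<lambda>a. a + a0) ` ?K \<subseteq> {a\<in>A. f a = y}" using a0 add hadd by auto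
    qed (use fin in auto)
  qed
  have "(\<Sum>z\<in>f ` A. \<Sum>x\<in>{x\<in>A. f x = z}. 1::nat) = (\<Sum>x\<in>A. 1)"
    by (rule sum.group) (auto simp: fin)
  hence "card A = (\<Sum>z\<in>f ` A. card {x\<in>A. f x = z})" by simp
  also have "\<dots> = (\<Sum>z\<in>f ` A. card ?K)" by (rule sum.cong[OF refl]) (rule fib)
  also have "\<dots> = card (f ` A) * card ?K" by simp
  finally show ?thesis .
qed

lemma card_Fn:
  assumes "finite F"
  shows "card (Fn F :: ('a::field^'n) set) = card F ^ CARD('n)"
proof -
  have "bij_betw vec_nth (Fn F :: ('a^'n) set) (PiE UNIV (\<lambda>_. F))"
  proof (rule bij_betw_byWitness[of _ vec_lambda])
    show "\<forall>a\<in>Fn F. vec_lambda (vec_nth a) = (a::'a^'n)" by simp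
    show "\<forall>a'\<in>PiE UNIV (\<lambda>_. F). vec_nth (vec_lambda a') = a'" by (auto simp: fun_eq_iff)
    show "vec_nth ` Fn F \<subseteq> PiE UNIV (\<lambda>_. F)" by (auto simp: Fn_def)
    show "vec_lambda ` PiE UNIV (\<lambda>_. F) \<subseteq> (Fn F :: ('a^'n) set)" by (auto simp: Fn_def PiE_iff)
  qed
  hence "card (Fn F :: ('a^'n) set) = card (PiE (UNIV::'n set) (\<lambda>_. F))" by (rule bij_betw_same_card)
  also have "\<dots> = card F ^ CARD('n)" using card_PiE[of "UNIV::'n set" "\<lambda>_. F"] by simp
  finally show ?thesis .
qed

locale gf =
  fixes q :: nat and F :: "'a::{field,finite} set"
  assumes F_eq: "F = subfield_q q" and cardF: "card F = q" and q2: "2 \<le> q"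
    and F0: "0 \<in> F" and F1: "1 \<in> F"
    and Fadd: "a \<in> F \<Longrightarrow> b \<in> F \<Longrightarrow> a + b \<in> F"
    and Fmul: "a \<in> F \<Longrightarrow> b \<in> F \<Longrightarrow> a * b \<in> F"
    and Fneg: "a \<in> F \<Longrightarrow> - a \<in> F"
    and Finv: "a \<in> F \<Longrightarrow> inverse a \<in> F"
begin

lemma Ffin: "finite F" by simp

lemma Fdiff: "a \<in> F \<Longrightarrow> b \<in> F \<Longrightarrow> a - b \<in> F"
  using Fadd[of a "- b"] Fneg[of b] by simp

sublocale A: fsp "(*)" F
  by unfold_locales (auto simp: algebra_simps F0 F1 Fadd Fmul Fneg Finv)

lemma V_fsp: "fsp ((*s) :: 'a \<Rightarrow> 'a^'n \<Rightarrow> 'a^'n) F"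
  by unfold_locales (auto simp: vec_eq_iff algebra_simps F0 F1 Fadd Fmul Fneg Finv)

lemma F_sum: "(\<And>i. i \<in> I \<Longrightarrow> f i \<in> F) \<Longrightarrow> sum f I \<in> F"
proof (induction I rule: infinite_finite_induct)
  case (infinite A) thus ?case using F0 by simp
next
  case empty thus ?case using F0 by simp
next
  case (insert x A) thus ?case using Fadd by simp
qed

lemma A_subsp_sum:
  assumes "A.subsp S" "\<And>i. i \<in> I \<Longrightarrow> f i \<in> S" "finite I" shows "sum f I \<in> S"
  using assms(3,2)
proof (induction I rule: finite_induct)
  case empty thus ?case using assms(1) by (simp add: A.subsp_def)
next
  case (insert x I) thus ?case using assms(1) unfolding A.subsp_def by simp
qed

definition Sx :: "'a^'n \<Rightarrow> 'a set" where
  "Sx x = (\<lambda>a. dotp a x) ` Fn F"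

lemma dotp_axis: "dotp (axis i 1) x = x $ i"
  by (simp add: dotp_def axis_def if_distrib[of "\<lambda>a. a * _"] cong: if_cong)

lemma axis_Fn: "axis i 1 \<in> Fn F"
  using F0 F1 by (simp add: Fn_def axis_def)

lemma Sx_subsp: "A.subsp (Sx x)"
  unfolding A.subsp_def Sx_def
proof (intro conjI ballI)
  have "(0::'a^'n) \<in> Fn F" using F0 by (simp add: Fn_def)
  moreover have "dotp 0 x = 0" by (simp add: dotp_def)
  ultimately show "0 \<in> (\<lambda>a. dotp a x) ` Fn F" by force
next
  fix y z assume "y \<in> (\<lambda>a. dotp a x) ` Fn F" "z \<in> (\<lambda>a. dotp a x) ` Fn F"
  then obtain a b where ab: "a \<in> Fn F" "b \<in> Fn F" "y = dotp a x" "z = dotp b x" by auto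
  have "a + b \<in> Fn F" using ab Fadd by (simp add: Fn_def)
  moreover have "dotp (a + b) x = y + z" using ab by (simp add: dotp_def algebra_simps sum.distrib)
  ultimately show "y + z \<in> (\<lambda>a. dotp a x) ` Fn F" by force
next
  fix c y assume c: "c \<in> F" and "y \<in> (\<lambda>a. dotp a x) ` Fn F"
  then obtain a where a: "a \<in> Fn F" "y = dotp a x" by auto
  have "c *s a \<in> Fn F" using a c Fmul by (simp add: Fn_def)
  moreover have "dotp (c *s a) x = c * y" using a by (simp add: dotp_def sum_distrib_left algebra_simps)
  ultimately show "c * y \<in> (\<lambda>a. dotp a x) ` Fn F" by force
qed

lemma rk_card: fixes x :: "'a^'n::finite" shows "card (Sx x) = q ^ rk q x"
proof -
  obtain t r where t: "\<forall>i<r. t i \<in> Sx x" "A.ind t r" "A.spn t r = Sx x"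
    using A.basis_exists[OF Sx_subsp[of x] finite[of "Sx x"]] by blast
  have cS: "card (Sx x) = q ^ r" using A.card_spn_ind[OF t(2)] t(3) cardF by simp
  define P where "P = (\<lambda>r. \<exists>b :: nat \<Rightarrow> 'a. \<forall>i. \<exists>c :: nat \<Rightarrow> 'a.
      (\<forall>j. c j \<in> subfield_q q) \<and> x $ i = (\<Sum>j<r. c j * b j))"
  have rkP: "rk q x = (LEAST r. P r)" unfolding rk_def P_def by simp
  have Pr: "P r" unfolding P_def
  proof (rule exI[of _ t], rule allI)
    fix i
    have "x $ i = dotp (axis i 1) x" by (simp add: dotp_axis)
    hence "x $ i \<in> Sx x" unfolding Sx_def using axis_Fn by (rule image_eqI)
    hence "x $ i \<in> A.spn t r" using t(3) by simp
    then obtain c where c: "\<forall>j<r. c j \<in> F" "x $ i = A.lc c t r" by (auto simp: A.spn_def)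
    show "\<exists>c. (\<forall>j. c j \<in> subfield_q q) \<and> x $ i = (\<Sum>j<r. c j * t j)"
      using c F0 unfolding F_eq[symmetric] A.lc_def
      by (intro exI[of _ "\<lambda>j. if j < r then c j else 0"]) auto
  qed
  have le1: "rk q x \<le> r" unfolding rkP by (rule Least_le) (rule Pr)
  have Prk: "P (rk q x)" unfolding rkP by (rule LeastI[of P, OF Pr])
  then obtain b where b: "\<forall>i. \<exists>c. (\<forall>j. c j \<in> F) \<and> x $ i = (\<Sum>j<rk q x. c j * b j)"
    unfolding P_def F_eq by blast
  have "Sx x \<subseteq> A.spn b (rk q x)"
  proof
    fix y assume "y \<in> Sx x"
    then obtain a where a: "a \<in> Fn F" "y = dotp a x" by (auto simp: Sx_def)
    have xi: "x $ l \<in> A.spn b (rk q x)" for l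
    proof -
      obtain c where "\<forall>j. c j \<in> F" "x $ l = (\<Sum>j<rk q x. c j * b j)" using b by blast
      thus ?thesis unfolding A.spn_def A.lc_def by blast
    qed
    have "(\<Sum>l\<in>UNIV. a $ l * x $ l) \<in> A.spn b (rk q x)"
    proof (rule A_subsp_sum[OF A.subsp_spn])
      fix l :: 'n
      have "a $ l \<in> F" using a(1) by (simp add: Fn_def)
      thus "a $ l * x $ l \<in> A.spn b (rk q x)" using A.subsp_spn xi unfolding A.subsp_def by blast
    qed simp
    thus "y \<in> A.spn b (rk q x)" using a by (simp add: dotp_def)
  qed
  hence "card (Sx x) \<le> card (A.spn b (rk q x))" by (intro card_mono A.finite_spn)
  also have "\<dots> \<le> q ^ rk q x" using A.card_spn_le[of b "rk q x"] cardF by simp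
  finally have "q ^ r \<le> q ^ rk q x" using cS by simp
  hence "r \<le> rk q x" using q2 by (simp add: power_le_imp_le_exp)
  thus ?thesis using le1 cS by simp
qed

definition Kx :: "'a^'n \<Rightarrow> ('a^'n) set" where
  "Kx x = {a \<in> Fn F. dotp a x = 0}"

lemma Kx_card: fixes x :: "'a^'n::finite" shows "card (Kx x) = q ^ (CARD('n) - rk q x) \<and> rk q x \<le> CARD('n)"
proof -
  have fin: "finite (Fn F :: ('a^'n) set)" by simp
  have "card (Fn F :: ('a^'n) set) = card ((\<lambda>a. dotp a x) ` Fn F) * card {a \<in> Fn F. dotp a x = 0}"
  proof (rule card_hom[OF fin])
    fix a b :: "'a^'n" assume ab: "a \<in> Fn F" "b \<in> Fn F"
    show "a + b \<in> Fn F" using ab Fadd by (simp add: Fn_def)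
    show "a - b \<in> Fn F" using ab by (simp add: Fn_def Fdiff)
    show "dotp (a - b) x = dotp a x - dotp b x" by (simp add: dotp_def algebra_simps sum_subtractf)
  qed
  hence e: "q ^ CARD('n) = q ^ rk q x * card (Kx x)"
    using card_Fn[OF Ffin, where 'n='n] rk_card[of x] cardF by (simp add: Sx_def Kx_def)
  have "0 \<in> Kx x" using F0 by (simp add: Kx_def Fn_def dotp_def)
  hence "Kx x \<noteq> {}" by blast
  hence "card (Kx x) \<ge> 1" by (simp add: card_gt_0_iff Suc_le_eq)
  hence "q ^ rk q x * 1 \<le> q ^ rk q x * card (Kx x)" by (rule mult_le_mono2)
  hence "q ^ rk q x \<le> q ^ CARD('n)" using e by simp
  hence le: "rk q x \<le> CARD('n)" using q2 by (simp add: power_le_imp_le_exp)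
  hence "q ^ CARD('n) = q ^ rk q x * q ^ (CARD('n) - rk q x)" by (simp flip: power_add)
  hence "card (Kx x) = q ^ (CARD('n) - rk q x)" using e q2 by simp
  thus ?thesis using le by simp
qed

end

lemma U_fsp: "fsp ((*s) :: 'a::{field,finite} \<Rightarrow> 'a^'n \<Rightarrow> 'a^'n) UNIV"
  by unfold_locales (auto simp: vec_eq_iff algebra_simps)

lemma W_fsp: "fsp (\<lambda>(a::'a::{field,finite}) (g::nat \<Rightarrow> 'a). \<lambda>i. a * g i) UNIV"
  by unfold_locales (auto simp: fun_eq_iff algebra_simps)

lemma sum_fun_apply: "(\<Sum>s\<in>S. f s) (i::'i) = (\<Sum>s\<in>S. f s i)" for f :: "'s \<Rightarrow> 'i \<Rightarrow> 'a::comm_monoid_add"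
  by (induction S rule: infinite_finite_induct) auto

definition Zs :: "nat \<Rightarrow> (nat \<Rightarrow> 'a::zero) set" where
  "Zs r = {g. \<forall>i\<ge>r. g i = 0}"

lemma card_Zs: "card (Zs r :: (nat \<Rightarrow> 'a::{zero,finite}) set) = CARD('a) ^ r \<and> finite (Zs r :: (nat \<Rightarrow> 'a) set)"
proof -
  have b: "bij_betw (\<lambda>g. restrict g {..<r}) (Zs r :: (nat \<Rightarrow> 'a) set) (PiE {..<r} (\<lambda>_. UNIV))"
  proof (rule bij_betw_byWitness[of _ "\<lambda>h i. if i < r then h i else 0"])
    show "\<forall>a\<in>Zs r. (\<lambda>i. if i < r then restrict a {..<r} i else 0) = (a :: nat \<Rightarrow> 'a)"
    proof (intro ballI ext)
      fix a :: "nat \<Rightarrow> 'a" and i assume "a \<in> Zs r"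
      thus "(if i < r then restrict a {..<r} i else 0) = a i" by (cases "i < r") (simp_all add: Zs_def)
    qed
    show "\<forall>a'\<in>PiE {..<r} (\<lambda>_. UNIV). restrict (\<lambda>i. if i < r then a' i else (0::'a)) {..<r} = a'"
    proof (intro ballI ext)
      fix a' :: "nat \<Rightarrow> 'a" and i assume a': "a' \<in> PiE {..<r} (\<lambda>_. UNIV)"
      show "restrict (\<lambda>i. if i < r then a' i else (0::'a)) {..<r} i = a' i"
        using PiE_arb[OF a', of i] by (cases "i < r") simp_all
    qed
    show "(\<lambda>g. restrict g {..<r}) ` Zs r \<subseteq> PiE {..<r} (\<lambda>_. UNIV)" by (rule image_subsetI, subst restrict_PiE_iff) simp
    show "(\<lambda>h i. if i < r then h i else 0) ` PiE {..<r} (\<lambda>_. UNIV) \<subseteq> (Zs r :: (nat \<Rightarrow> 'a) set)"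
      by (rule image_subsetI) (simp add: Zs_def)
  qed
  have fin: "finite (PiE {..<r} (\<lambda>_. UNIV :: 'a set))" by (rule finite_PiE) auto
  have "card (Zs r :: (nat \<Rightarrow> 'a) set) = card (PiE {..<r} (\<lambda>_. UNIV :: 'a set))"
    by (rule bij_betw_same_card[OF b])
  also have "\<dots> = CARD('a) ^ r" using card_PiE[of "{..<r}" "\<lambda>_. UNIV :: 'a set"] by simp
  finally show ?thesis using bij_betw_finite[OF b] fin by simp
qed

lemma card_subspace:
  fixes C :: "('a::{field,finite}^'n::finite) set"
  assumes sub: "vec.subspace C"
  shows "card C = CARD('a) ^ vec.dim C"
proof -
  interpret U: fsp "(*s) :: 'a \<Rightarrow> 'a^'n \<Rightarrow> 'a^'n" UNIV by (rule U_fsp)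
  have sC: "U.subsp C" using sub unfolding U.subsp_def vec.subspace_def by auto
  obtain t j where t: "\<forall>i<j. t i \<in> C" "U.ind t j" "U.spn t j = C"
    using U.basis_exists[OF sC finite[of C]] by blast
  have cC: "card C = CARD('a) ^ j" using U.card_spn_ind[OF t(2)] t(3) by simp
  have inj: "inj_on t {..<j}"
  proof (rule inj_onI, rule ccontr)
    fix a b assume a: "a \<in> {..<j}" and b: "b \<in> {..<j}" and e: "t a = t b" and ne: "a \<noteq> b"
    define c where "c = (\<lambda>l. (if l = a then 1 else 0) - (if l = b then (1::'a) else 0))"
    have "U.lc c t j = t a - t b" unfolding c_def U.lc_diff using a b by (simp add: U.lc_delta)
    hence "U.lc c t j = 0" using e by simp
    hence "c a = 0" using U.indD[OF t(2), of c a] a by simp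
    thus False using ne by (simp add: c_def)
  qed
  define B where "B = t ` {..<j}"
  have cB: "card B = j" unfolding B_def using card_image[OF inj] by simp
  have ind: "vec.independent B"
    unfolding vec.independent_explicit
  proof (intro conjI allI impI ballI)
    show "finite B" by simp
  next
    fix u v assume z: "(\<Sum>v\<in>B. u v *s v) = 0" and v: "v \<in> B"
    have "U.lc (\<lambda>i. u (t i)) t j = (\<Sum>v\<in>B. u v *s v)"
      unfolding U.lc_def B_def by (subst sum.reindex[OF inj]) simp
    hence z': "U.lc (\<lambda>i. u (t i)) t j = 0" using z by simp
    obtain i where i: "i < j" "v = t i" using v unfolding B_def by auto
    show "u v = 0" using U.indD[OF t(2) _ z' i(1)] i by simp
  qed
  have BC: "B \<subseteq> C" using t(1) unfolding B_def by auto
  have CB: "C \<subseteq> vec.span B"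
  proof
    fix x assume "x \<in> C"
    then obtain c where c: "x = U.lc c t j" using t(3) unfolding U.spn_def by auto
    show "x \<in> vec.span B" unfolding c U.lc_def B_def
      by (intro vec.span_sum vec.span_scale vec.span_base) auto
  qed
  have "card B = vec.dim C" by (rule vec.basis_card_eq_dim[OF BC CB ind])
  thus ?thesis using cC cB by simp
qed

lemma sum_swap_aux: "(\<Sum>s<m'. \<Sum>i<\<nu>. M i s * e s * (tt i :: 'a::field)) = (\<Sum>s<m'. (\<Sum>i<\<nu>. M i s * tt i) * e s)"
  by (simp add: sum_distrib_left sum_distrib_right mult_ac)

context gf
begin

lemma rk_le:
  fixes t :: "nat \<Rightarrow> 'a^'n::finite"
  assumes tF: "\<forall>i<\<nu>. t i \<in> Fn F"
  shows "rk q (\<Sum>i<\<nu>. lam i *s t i) \<le> \<nu>"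
  unfolding rk_def
proof (rule Least_le, rule exI[of _ lam], rule allI)
  fix l
  have h1: "(\<Sum>i<\<nu>. lam i *s t i) $ l = (\<Sum>j<\<nu>. (if j < \<nu> then t j $ l else 0) * lam j)"
    by (simp add: sum_component mult.commute)
  have h2: "\<forall>j. (if j < \<nu> then t j $ l else 0) \<in> subfield_q q"
    using tF F0 unfolding F_eq[symmetric] Fn_def by auto
  show "\<exists>c. (\<forall>j. c j \<in> subfield_q q) \<and> (\<Sum>i<\<nu>. lam i *s t i) $ l = (\<Sum>j<\<nu>. c j * lam j)"
    by (rule exI[of _ "\<lambda>j. if j < \<nu> then t j $ l else 0"], rule conjI[OF h2 h1])
qed

lemma lift_ind:
  fixes t :: "nat \<Rightarrow> 'a^'n::finite"
  assumes ind: "fsp.ind ((*s) :: 'a \<Rightarrow> 'a^'n \<Rightarrow> 'a^'n) F t \<nu>" and tF: "\<forall>i<\<nu>. t i \<in> Fn F"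
    and z: "(\<Sum>i<\<nu>. lam i *s t i) = 0"
  shows "\<forall>i<\<nu>. lam i = 0"
proof -
  interpret V: fsp "(*s) :: 'a \<Rightarrow> 'a^'n \<Rightarrow> 'a^'n" F by (rule V_fsp)
  have sU: "A.subsp UNIV" by (simp add: A.subsp_def)
  obtain e m' where e: "A.ind e m'" "A.spn e m' = UNIV"
    using A.basis_exists[OF sU finite] by blast
  have "\<forall>i. \<exists>\<mu>. (\<forall>s<m'. \<mu> s \<in> F) \<and> lam i = A.lc \<mu> e m'"
  proof
    fix i
    have "lam i \<in> A.spn e m'" using e(2) by simp
    thus "\<exists>\<mu>. (\<forall>s<m'. \<mu> s \<in> F) \<and> lam i = A.lc \<mu> e m'" unfolding A.spn_def by simp
  qed
  from choice[OF this] obtain M where M: "\<forall>i. (\<forall>s<m'. M i s \<in> F) \<and> lam i = A.lc (M i) e m'"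
    by blast
  have lamM: "lam i = (\<Sum>s<m'. M i s * e s)" for i
    using conjunct2[OF spec[OF M, of i]] unfolding A.lc_def .
  have MF: "M i s \<in> F" if "s < m'" for i s using conjunct1[OF spec[OF M, of i]] that by blast
  have Mz: "(\<Sum>i<\<nu>. M i s *s t i) = 0" if s: "s < m'" for s
  proof (subst vec_eq_iff, rule allI)
    fix l
    define d where "d = (\<lambda>s. \<Sum>i<\<nu>. M i s * t i $ l)"
    have dF: "\<forall>s<m'. d s \<in> F"
    proof (intro allI impI)
      fix s assume "s < m'"
      show "d s \<in> F" unfolding d_def
      proof (rule F_sum)
        fix i assume "i \<in> {..<\<nu>}"
        hence "t i $ l \<in> F" using tF by (simp add: Fn_def)
        thus "M i s * t i $ l \<in> F" by (rule Fmul[OF MF[OF \<open>s < m'\<close>]])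
      qed
    qed
    have "0 = (\<Sum>i<\<nu>. lam i *s t i) $ l" using z by simp
    also have "\<dots> = (\<Sum>i<\<nu>. lam i * t i $ l)" by (simp add: sum_component)
    also have "\<dots> = (\<Sum>i<\<nu>. (\<Sum>s<m'. M i s * e s) * t i $ l)"
      by (simp only: lamM)
    also have "\<dots> = (\<Sum>i<\<nu>. \<Sum>s<m'. M i s * e s * t i $ l)"
      by (simp add: sum_distrib_right)
    also have "\<dots> = (\<Sum>s<m'. \<Sum>i<\<nu>. M i s * e s * t i $ l)" by (rule sum.swap)
    also have "\<dots> = A.lc d e m'"
    proof -
      have "(\<Sum>s<m'. \<Sum>i<\<nu>. M i s * e s * t i $ l) = (\<Sum>s<m'. (\<Sum>i<\<nu>. M i s * t i $ l) * e s)"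
        by (rule sum_swap_aux)
      thus ?thesis unfolding A.lc_def d_def .
    qed
    finally have "A.lc d e m' = 0" by simp
    hence "d s = 0" using A.indD[OF e(1) dF _ s] by simp
    thus "(\<Sum>i<\<nu>. M i s *s t i) $ l = 0 $ l" by (simp add: sum_component d_def)
  qed
  show ?thesis
  proof (intro allI impI)
    fix i assume i: "i < \<nu>"
    have "\<forall>s<m'. M i s = 0"
    proof (intro allI impI)
      fix s assume s: "s < m'"
      have "V.lc (\<lambda>i. M i s) t \<nu> = 0" using Mz[OF s] by (simp add: V.lc_def)
      moreover have "\<forall>i<\<nu>. M i s \<in> F" using MF[OF s] by blast
      ultimately show "M i s = 0" using V.indD[OF ind, of "\<lambda>i. M i s" i] i by simp
    qed
    thus "lam i = 0" using lamM[of i] by simp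
  qed
qed

end

lemma dotp_diff: "dotp u (a - b) = dotp u a - dotp u b"
  by (simp add: dotp_def right_diff_distrib sum_subtractf)
lemma dotp_add: "dotp u (a + b) = dotp u a + dotp u b"
  by (simp add: dotp_def distrib_left sum.distrib)
lemma dotp_scale: "dotp u (c *s a) = c * dotp u a"
  by (simp add: dotp_def sum_distrib_left mult_ac)
lemma dotp_0: "dotp u 0 = 0"
  by (simp add: dotp_def)

lemma dotp_lin: "dotp (\<Sum>i<\<nu>. lam i *s t i) c = (\<Sum>i<\<nu>. lam i * dotp (t i) c)"
proof -
  have "dotp (\<Sum>i<\<nu>. lam i *s t i) c = (\<Sum>l\<in>UNIV. \<Sum>i<\<nu>. lam i * (t i $ l * c $ l))"
    by (simp add: dotp_def sum_component sum_distrib_right mult.assoc)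
  also have "\<dots> = (\<Sum>i<\<nu>. \<Sum>l\<in>UNIV. lam i * (t i $ l * c $ l))" by (rule sum.swap)
  also have "\<dots> = (\<Sum>i<\<nu>. lam i * dotp (t i) c)" by (simp add: dotp_def sum_distrib_left)
  finally show ?thesis .
qed

lemma swap2: "(\<Sum>i<\<nu>. lam i * (\<Sum>s<r. cc s * v s i)) = (\<Sum>s<r. cc s * (\<Sum>i<\<nu>. lam i * v s i)) "
  for lam :: "nat \<Rightarrow> 'a::comm_ring"
proof -
  have "(\<Sum>i<\<nu>. lam i * (\<Sum>s<r. cc s * v s i)) = (\<Sum>i<\<nu>. \<Sum>s<r. cc s * (lam i * v s i))"
    by (simp add: sum_distrib_left mult_ac)
  also have "\<dots> = (\<Sum>s<r. \<Sum>i<\<nu>. cc s * (lam i * v s i))" by (rule sum.swap)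
  also have "\<dots> = (\<Sum>s<r. cc s * (\<Sum>i<\<nu>. lam i * v s i))" by (simp add: sum_distrib_left)
  finally show ?thesis .
qed

context gf
begin

lemma count_D:
  fixes C :: "('a^'n::finite) set" and t :: "nat \<Rightarrow> 'a^'n"
  assumes sub: "vec.subspace C"
    and dual: "\<forall>x\<in>dual_code C. \<forall>y\<in>dual_code C. x \<noteq> y \<longrightarrow> \<nu> < rk q (x - y)"
    and ind: "fsp.ind ((*s) :: 'a \<Rightarrow> 'a^'n \<Rightarrow> 'a^'n) F t \<nu>" and tF: "\<forall>i<\<nu>. t i \<in> Fn F"
  shows "\<nu> \<le> vec.dim C \<and> card {c\<in>C. \<forall>i<\<nu>. dotp (t i) c = 0} = CARD('a) ^ (vec.dim C - \<nu>)"
proof -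
  interpret W: fsp "\<lambda>(a::'a) (g::nat\<Rightarrow>'a). \<lambda>i. a * g i" "UNIV::'a set" by (rule W_fsp)
  define f where "f = (\<lambda>c. \<lambda>i. if i < \<nu> then dotp (t i) c else (0::'a))"
  define I where "I = f ` C"
  define D where "D = {c\<in>C. \<forall>i<\<nu>. dotp (t i) c = 0}"
  have CARD2: "1 < CARD('a)"
  proof -
    have "card {0::'a, 1} \<le> CARD('a)" by (intro card_mono) auto
    thus ?thesis by simp
  qed
  have fdiff: "f (a - b) = f a - f b" for a b
    by (rule ext) (simp add: f_def dotp_diff)
  have fadd: "f (a + b) = f a + f b" for a b
    by (rule ext) (simp add: f_def dotp_add)
  have fscale: "f (c *s a) = (\<lambda>i. c * f a i)" for c a
    by (rule ext) (simp add: f_def dotp_scale)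
  have f0: "f 0 = 0" by (rule ext) (simp add: f_def dotp_0)
  have Dk: "D = {c\<in>C. f c = 0}"
    unfolding D_def f_def by (auto simp: fun_eq_iff)
  have cardC: "card C = card I * card D"
    unfolding I_def Dk
    by (rule card_hom) (auto simp: fdiff vec.subspace_add[OF sub] vec.subspace_diff[OF sub])
  have IZ: "I \<subseteq> Zs \<nu>" unfolding I_def Zs_def f_def by auto
  have finZ: "finite (Zs \<nu> :: (nat \<Rightarrow> 'a) set)" using card_Zs by blast
  have I_eq: "I = Zs \<nu>"
  proof (rule ccontr)
    assume ne: "I \<noteq> Zs \<nu>"
    have lt: "card I < card (Zs \<nu> :: (nat \<Rightarrow> 'a) set)"
      using IZ ne finZ by (intro psubset_card_mono) auto
    have finI: "finite I" using IZ finZ by (rule finite_subset)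
    have sI: "W.subsp I" unfolding W.subsp_def
    proof (intro conjI ballI)
      have "0 = f 0" using f0 by simp
      thus "0 \<in> I" unfolding I_def by (rule image_eqI[OF _ vec.subspace_0[OF sub]])
    next
      fix x y assume "x \<in> I" "y \<in> I"
      then obtain a b where "a \<in> C" "b \<in> C" "x = f a" "y = f b" unfolding I_def by auto
      hence "x + y = f (a + b)" using fadd[of a b] by simp
      thus "x + y \<in> I" unfolding I_def
        by (rule image_eqI[OF _ vec.subspace_add[OF sub \<open>a \<in> C\<close> \<open>b \<in> C\<close>]])
    next
      fix c x assume "x \<in> I"
      then obtain a where "a \<in> C" "x = f a" unfolding I_def by auto
      hence "(\<lambda>i. c * x i) = f (c *s a)" using fscale[of c a] by simp
      thus "(\<lambda>i. c * x i) \<in> I" unfolding I_def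
        by (rule image_eqI[OF _ vec.subspace_scale[OF sub \<open>a \<in> C\<close>]])
    qed
    obtain v r where v: "\<forall>s<r. v s \<in> I" "W.ind v r" "W.spn v r = I"
      using W.basis_exists[OF sI finI] by blast
    have cI: "card I = CARD('a) ^ r" using W.card_spn_ind[OF v(2)] v(3) by simp
    have "CARD('a) ^ r < CARD('a) ^ \<nu>" using lt cI card_Zs[of \<nu>, where 'a='a] by simp
    hence rnu: "r < \<nu>" using CARD2 by (rule power_less_imp_less_exp[rotated])
    define h where "h = (\<lambda>lam::nat\<Rightarrow>'a. \<lambda>s. if s < r then (\<Sum>i<\<nu>. lam i * v s i) else 0)"
    have hZ: "h ` Zs \<nu> \<subseteq> Zs r" unfolding h_def Zs_def by auto
    have "card (h ` Zs \<nu>) \<le> card (Zs r :: (nat \<Rightarrow> 'a) set)"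
      using hZ card_Zs[of r, where 'a='a] by (intro card_mono) auto
    also have "\<dots> = CARD('a) ^ r" using card_Zs[of r, where 'a='a] by simp
    also have "\<dots> < CARD('a) ^ \<nu>" using rnu CARD2 by (rule power_strict_increasing)
    also have "\<dots> = card (Zs \<nu> :: (nat \<Rightarrow> 'a) set)" using card_Zs[of \<nu>, where 'a='a] by simp
    finally have clt: "card (h ` Zs \<nu>) < card (Zs \<nu> :: (nat \<Rightarrow> 'a) set)" .
    have "\<not> inj_on h (Zs \<nu>)"
    proof
      assume "inj_on h (Zs \<nu>)"
      hence "card (h ` Zs \<nu>) = card (Zs \<nu> :: (nat \<Rightarrow> 'a) set)" by (rule card_image)
      thus False using clt by simp
    qed
    then obtain l1 l2 where l: "l1 \<in> Zs \<nu>" "l2 \<in> Zs \<nu>" "h l1 = h l2" "l1 \<noteq> l2"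
      unfolding inj_on_def by auto
    define lam where "lam = (\<lambda>i. l1 i - l2 i)"
    obtain i0 where i0: "lam i0 \<noteq> 0" using l(4) unfolding lam_def fun_eq_iff by auto
    have i0nu: "i0 < \<nu>"
    proof (rule ccontr)
      assume "\<not> i0 < \<nu>"
      hence "l1 i0 = 0" "l2 i0 = 0" using l(1,2) unfolding Zs_def by auto
      thus False using i0 unfolding lam_def by simp
    qed
    have hv: "(\<Sum>i<\<nu>. lam i * v s i) = 0" if s: "s < r" for s
    proof -
      have "(\<Sum>i<\<nu>. l1 i * v s i) = (\<Sum>i<\<nu>. l2 i * v s i)"
        using fun_cong[OF l(3), of s] s unfolding h_def by simp
      thus ?thesis unfolding lam_def by (simp add: left_diff_distrib sum_subtractf)
    qed
    define u where "u = (\<Sum>i<\<nu>. lam i *s t i)"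
    have uC: "dotp u c = 0" if c: "c \<in> C" for c
    proof -
      have "f c \<in> W.spn v r" using v(3) c unfolding I_def by simp
      then obtain cc where cc: "f c = W.lc cc v r" unfolding W.spn_def by blast
      have fci: "f c i = (\<Sum>s<r. cc s * v s i)" for i
        using cc unfolding W.lc_def by (simp add: sum_fun_apply)
      have "dotp u c = (\<Sum>i<\<nu>. lam i * dotp (t i) c)" unfolding u_def by (rule dotp_lin)
      also have "\<dots> = (\<Sum>i<\<nu>. lam i * f c i)" by (intro sum.cong refl) (simp add: f_def)
      also have "\<dots> = (\<Sum>i<\<nu>. lam i * (\<Sum>s<r. cc s * v s i))" by (simp only: fci)
      also have "\<dots> = (\<Sum>s<r. cc s * (\<Sum>i<\<nu>. lam i * v s i))" by (rule swap2)
      also have "\<dots> = 0" using hv by simp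
      finally show ?thesis .
    qed
    have udual: "u \<in> dual_code C" unfolding dual_code_def using uC by (simp add: dotp_def)
    have zdual: "0 \<in> dual_code C" unfolding dual_code_def by simp
    have "u \<noteq> 0"
    proof
      assume "u = 0"
      hence "(\<Sum>i<\<nu>. lam i *s t i) = 0" unfolding u_def .
      hence "\<forall>i<\<nu>. lam i = 0" by (rule lift_ind[OF ind tF])
      thus False using i0 i0nu by blast
    qed
    hence "\<nu> < rk q (u - 0)" using bspec[OF bspec[OF dual udual] zdual] by simp
    moreover have "rk q u \<le> \<nu>" unfolding u_def by (rule rk_le[OF tF])
    ultimately show False by simp
  qed
  have cC: "card C = CARD('a) ^ vec.dim C" by (rule card_subspace[OF sub])
  have cZ: "card (Zs \<nu> :: (nat \<Rightarrow> 'a) set) = CARD('a) ^ \<nu>" using card_Zs[of \<nu>, where 'a='a] by (rule conjunct1)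
  have "CARD('a) ^ vec.dim C = card C" by (rule cC[symmetric])
  also have "\<dots> = card I * card D" by (rule cardC)
  also have "\<dots> = CARD('a) ^ \<nu> * card D" by (simp only: I_eq cZ)
  finally have e: "CARD('a) ^ vec.dim C = CARD('a) ^ \<nu> * card D" .
  have "0 \<in> D" unfolding D_def using vec.subspace_0[OF sub] by (simp add: dotp_0)
  hence "D \<noteq> {}" by blast
  hence "card D \<ge> 1" by (simp add: card_gt_0_iff Suc_le_eq)
  hence "CARD('a) ^ \<nu> * 1 \<le> CARD('a) ^ \<nu> * card D" by (rule mult_le_mono2)
  hence "CARD('a) ^ \<nu> \<le> CARD('a) ^ vec.dim C" unfolding e by simp
  hence le: "\<nu> \<le> vec.dim C" by (rule power_le_imp_le_exp[OF CARD2])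
  have "CARD('a) ^ \<nu> * CARD('a) ^ (vec.dim C - \<nu>) = CARD('a) ^ (\<nu> + (vec.dim C - \<nu>))"
    by (rule power_add[symmetric])
  also have "\<nu> + (vec.dim C - \<nu>) = vec.dim C" using le by simp
  finally have "CARD('a) ^ \<nu> * card D = CARD('a) ^ \<nu> * CARD('a) ^ (vec.dim C - \<nu>)"
    using e by simp
  hence "card D = CARD('a) ^ (vec.dim C - \<nu>)" by simp
  thus ?thesis using le unfolding D_def by simp
qed

end

lemma dotp_add_l: "dotp (x + y) c = dotp x c + dotp y c"
  by (simp add: dotp_def distrib_right sum.distrib)
lemma dotp_scale_l: "dotp (a *s x) c = a * dotp x c"
  by (simp add: dotp_def sum_distrib_left mult.assoc)
lemma dotp_0_l: "dotp 0 c = 0"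
  by (simp add: dotp_def)

context gf
begin

lemma Fn_subsp: "fsp.subsp ((*s) :: 'a \<Rightarrow> 'a^'n::finite \<Rightarrow> 'a^'n) F (Fn F)"
proof -
  interpret V: fsp "(*s) :: 'a \<Rightarrow> 'a^'n \<Rightarrow> 'a^'n" F by (rule V_fsp)
  show ?thesis unfolding V.subsp_def Fn_def using F0 Fadd Fmul by simp
qed

lemma Kx_subsp: "fsp.subsp ((*s) :: 'a \<Rightarrow> 'a^'n::finite \<Rightarrow> 'a^'n) F (Kx c)"
proof -
  interpret V: fsp "(*s) :: 'a \<Rightarrow> 'a^'n \<Rightarrow> 'a^'n" F by (rule V_fsp)
  show ?thesis unfolding V.subsp_def Kx_def
  proof (intro conjI ballI)
    show "0 \<in> {a \<in> Fn F. dotp a c = 0}" using F0 by (simp add: Fn_def dotp_0_l)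
  next
    fix x y assume x: "x \<in> {a \<in> Fn F. dotp a c = 0}" and y: "y \<in> {a \<in> Fn F. dotp a c = 0}"
    have "dotp (x + y) c = dotp x c + dotp y c" by (rule dotp_add_l)
    thus "x + y \<in> {a \<in> Fn F. dotp a c = 0}" using x y Fadd by (simp add: Fn_def)
  next
    fix a x assume a: "a \<in> F" and x: "x \<in> {a \<in> Fn F. dotp a c = 0}"
    have "dotp (a *s x) c = a * dotp x c" by (rule dotp_scale_l)
    thus "a *s x \<in> {a \<in> Fn F. dotp a c = 0}" using x a Fmul by (simp add: Fn_def)
  qed
qed

lemma main_count:
  fixes C :: "('a^'n::finite) set"
  assumes sub: "vec.subspace C"
    and dual: "\<forall>x\<in>dual_code C. \<forall>y\<in>dual_code C. x \<noteq> y \<longrightarrow> \<nu> < rk q (x - y)"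
    and nu_le: "\<nu> \<le> CARD('n)"
  shows "\<nu> \<le> vec.dim C \<and>
    (\<Sum>c\<in>C. (\<Prod>i<\<nu>. q ^ (CARD('n) - rk q c) - q ^ i))
      = (\<Prod>i<\<nu>. q ^ CARD('n) - q ^ i) * CARD('a) ^ (vec.dim C - \<nu>)"
proof -
  interpret V: fsp "(*s) :: 'a \<Rightarrow> 'a^'n \<Rightarrow> 'a^'n" F by (rule V_fsp)
  define n where "n = CARD('n)"
  define T where "T = {t \<in> PiE {..<\<nu>} (\<lambda>_. Fn F). V.ind t \<nu>}"
  define P where "P = (\<lambda>c. {t \<in> PiE {..<\<nu>} (\<lambda>_. Kx c). V.ind t \<nu>})"
  define D where "D = (\<lambda>t. {c\<in>C. \<forall>i<\<nu>. dotp (t i) c = (0::'a)})"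
  have cP: "card (P c) = (\<Prod>i<\<nu>. q ^ (n - rk q c) - q ^ i)" for c
  proof -
    have "card (Kx c) = card F ^ (n - rk q c)" using Kx_card[of c] cardF by (simp add: n_def)
    from V.count_ind[OF Kx_subsp finite this] show ?thesis unfolding P_def cardF .
  qed
  have cT: "card T = (\<Prod>i<\<nu>. q ^ n - q ^ i)"
  proof -
    have "card (Fn F :: ('a^'n) set) = card F ^ n" using card_Fn[OF Ffin, where 'n='n] by (simp add: n_def)
    from V.count_ind[OF Fn_subsp finite this] show ?thesis unfolding T_def cardF .
  qed
  have finT: "finite T" unfolding T_def by (rule finite_subset[of _ "PiE {..<\<nu>} (\<lambda>_. Fn F)"]) (auto intro: finite_PiE)
  have finP: "finite (P c)" for c unfolding P_def
    by (rule finite_subset[of _ "PiE {..<\<nu>} (\<lambda>_. Kx c)"]) (auto intro: finite_PiE)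
  have Tpos: "card T > 0" unfolding cT
  proof (rule prod_pos)
    fix i assume "i \<in> {..<\<nu>}"
    hence "i < n" using nu_le by (simp add: n_def)
    hence "q ^ i < q ^ n" using q2 by (intro power_strict_increasing) auto
    thus "0 < q ^ n - q ^ i" by simp
  qed
  then obtain t0 where t0: "t0 \<in> T" by (metis card_gt_0_iff ex_in_conv)
  have t0': "V.ind t0 \<nu>" "\<forall>i<\<nu>. t0 i \<in> Fn F" using t0 unfolding T_def by (auto simp: PiE_iff)
  have le: "\<nu> \<le> vec.dim C" using count_D[OF sub dual t0'] by blast
  have cD: "card (D t) = CARD('a) ^ (vec.dim C - \<nu>)" if "t \<in> T" for t
  proof -
    have "V.ind t \<nu>" "\<forall>i<\<nu>. t i \<in> Fn F" using that unfolding T_def by (auto simp: PiE_iff)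
    from count_D[OF sub dual this] show ?thesis unfolding D_def by blast
  qed
  have swap: "Sigma C P = prod.swap ` Sigma T D"
  proof (rule set_eqI)
    fix x :: "('a^'n) \<times> (nat \<Rightarrow> 'a^'n)"
    obtain c t where x: "x = (c, t)" by fastforce
    have "x \<in> Sigma C P \<longleftrightarrow> c \<in> C \<and> t \<in> T \<and> (\<forall>i<\<nu>. dotp (t i) c = 0)"
      unfolding x P_def T_def Kx_def by (auto simp: PiE_iff)
    also have "\<dots> \<longleftrightarrow> (t, c) \<in> Sigma T D" unfolding D_def by auto
    also have "\<dots> \<longleftrightarrow> x \<in> prod.swap ` Sigma T D" unfolding x by (auto simp: image_iff)
    finally show "x \<in> Sigma C P \<longleftrightarrow> x \<in> prod.swap ` Sigma T D" .
  qed
  have "(\<Sum>c\<in>C. (\<Prod>i<\<nu>. q ^ (n - rk q c) - q ^ i)) = (\<Sum>c\<in>C. card (P c))" by (simp add: cP)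
  also have "\<dots> = card (Sigma C P)" using finP by (simp add: card_SigmaI)
  also have "\<dots> = card (Sigma T D)" unfolding swap by (rule card_image) (simp add: swap_inj_on)
  also have "\<dots> = (\<Sum>t\<in>T. card (D t))" using finT by (simp add: card_SigmaI D_def)
  also have "\<dots> = (\<Sum>t\<in>T. CARD('a) ^ (vec.dim C - \<nu>))" by (rule sum.cong[OF refl]) (rule cD)
  also have "\<dots> = card T * CARD('a) ^ (vec.dim C - \<nu>)" by simp
  finally show ?thesis using le cT by (simp add: n_def)
qed

end

lemma realPN: assumes q0: "q > 0" shows "real (\<Prod>i<\<nu>. (q::nat) ^ a - q ^ i) = (\<Prod>i<\<nu>. real q ^ a - real q ^ i)"
proof (cases "\<nu> \<le> a")
  case True
  have "real (\<Prod>i<\<nu>. q ^ a - q ^ i) = (\<Prod>i<\<nu>. real (q ^ a - q ^ i))" by simp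
  also have "\<dots> = (\<Prod>i<\<nu>. real q ^ a - real q ^ i)"
  proof (rule prod.cong[OF refl])
    fix i assume "i \<in> {..<\<nu>}"
    hence "i \<le> a" using True by simp
    show "real (q ^ a - q ^ i) = real q ^ a - real q ^ i"
    proof -
      have "q ^ i \<le> q ^ a" using \<open>i \<le> a\<close> q0 by (intro power_increasing) auto
      thus ?thesis by (simp add: of_nat_diff)
    qed
  qed
  finally show ?thesis .
next
  case False
  hence a: "a \<in> {..<\<nu>}" by simp
  have h1: "(\<Prod>i<\<nu>. q ^ a - q ^ i) = 0" using a by (intro prod_zero) auto
  have h2: "(\<Prod>i<\<nu>. real q ^ a - real q ^ i) = 0" using a by (intro prod_zero) auto
  show ?thesis by (simp only: h1 h2 of_nat_0)
qed

lemma gb_eq: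
  assumes q: "q > 0"
  shows "gauss_binom q a \<nu> = real (\<Prod>i<\<nu>. q ^ a - q ^ i) / (\<Prod>i<\<nu>. real q ^ \<nu> - real q ^ i)"
  unfolding gauss_binom_def prod_dividef realPN[OF q] ..

theorem corollary3:
  fixes C :: "('a::{field,finite} ^ 'n) set"
    and q m k \<nu> :: nat
  assumes q_pp: "\<exists>p e. prime p \<and> e > 0 \<and> q = p ^ e"
    and card_field: "CARD('a) = q ^ m"
    and lin: "vec.subspace C"
    and dimC: "vec.dim C = k"
    and nu_le: "\<nu> \<le> CARD('n)"
    and nu_lt_dual: "\<forall>x\<in>dual_code C. \<forall>y\<in>dual_code C. x \<noteq> y \<longrightarrow> \<nu> < rk q (x - y)"
  shows "(\<Sum>i = 0..CARD('n) - \<nu>.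
            gauss_binom q (CARD('n) - i) \<nu> * real (rank_weight_count q C i))
         = real q powi (int m * (int k - int \<nu>)) * gauss_binom q (CARD('n)) \<nu>"
proof -
  obtain p e where p: "prime p" and e: "e > 0" and qpe: "q = p ^ e" using q_pp by blast
  have cq: "CARD('a) = (p ^ e) ^ m" using card_field qpe by simp
  have q2: "2 \<le> q"
  proof -
    have "p ^ 1 \<le> p ^ e" using e prime_gt_0_nat[OF p] by (intro power_increasing) auto
    thus ?thesis using prime_ge_2_nat[OF p] qpe by simp
  qed
  have frob: "((x::'a) + y) ^ q = x ^ q + y ^ q" for x y
    using frob_add[OF p e cq] qpe by simp
  let ?F = "subfield_q q :: 'a set"
  have gfF: "gf q ?F"
  proof
    show "?F = subfield_q q" ..
    show "card ?F = q" using subfield_card[OF p e qpe card_field] .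
    show "2 \<le> q" by (rule q2)
    show "0 \<in> ?F" using q2 by (simp add: subfield_q_def)
    show "1 \<in> ?F" by (simp add: subfield_q_def)
    fix a b :: 'a
    show "a \<in> ?F \<Longrightarrow> b \<in> ?F \<Longrightarrow> a + b \<in> ?F" by (simp add: subfield_q_def frob)
    show "a \<in> ?F \<Longrightarrow> b \<in> ?F \<Longrightarrow> a * b \<in> ?F" by (simp add: subfield_q_def power_mult_distrib)
    show "a \<in> ?F \<Longrightarrow> inverse a \<in> ?F" by (simp add: subfield_q_def power_inverse)
    assume aF: "a \<in> ?F"
    have "(a + - a) ^ q = a ^ q + (- a) ^ q" by (rule frob)
    moreover have "(0::'a) ^ q = 0" using q2 by simp
    ultimately have "0 = a + (- a) ^ q" using aF by (simp add: subfield_q_def)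
    hence "(- a) ^ q = - a" by (simp add: eq_neg_iff_add_eq_0 add.commute)
    thus "- a \<in> ?F" by (simp add: subfield_q_def)
  qed
  interpret gf q ?F by (rule gfF)
  define n where "n = CARD('n)"
  define PN where "PN = (\<lambda>a. (\<Prod>i<\<nu>. q ^ a - q ^ i))"
  define Dv where "Dv = (\<Prod>i<\<nu>. real q ^ \<nu> - real q ^ i)"
  have gb: "gauss_binom q a \<nu> = real (PN a) / Dv" for a
    unfolding PN_def Dv_def using q2 by (intro gb_eq) simp
  have mc: "\<nu> \<le> k \<and> (\<Sum>c\<in>C. PN (n - rk q c)) = PN n * CARD('a) ^ (k - \<nu>)"
    using main_count[OF lin nu_lt_dual nu_le] dimC unfolding PN_def n_def by simp
  have rkn: "rk q c \<le> n" for c :: "'a^'n" using Kx_card[of c] by (simp add: n_def)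
  have PN0: "PN a = 0" if "a < \<nu>" for a
    unfolding PN_def using that by (intro prod_zero) auto
  have "(\<Sum>i = 0..n - \<nu>. gauss_binom q (n - i) \<nu> * real (rank_weight_count q C i))
      = (\<Sum>i = 0..n. gauss_binom q (n - i) \<nu> * real (rank_weight_count q C i))"
  proof (rule sum.mono_neutral_left)
    show "\<forall>i\<in>{0..n} - {0..n - \<nu>}. gauss_binom q (n - i) \<nu> * real (rank_weight_count q C i) = 0"
    proof
      fix i assume "i \<in> {0..n} - {0..n - \<nu>}"
      hence "n - i < \<nu>" by auto
      thus "gauss_binom q (n - i) \<nu> * real (rank_weight_count q C i) = 0" by (simp add: gb PN0)
    qed
  qed auto
  also have "\<dots> = (\<Sum>i = 0..n. \<Sum>c\<in>{c\<in>C. rk q c = i}. gauss_binom q (n - rk q c) \<nu>)"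
    unfolding rank_weight_count_def by (intro sum.cong refl) simp
  also have "\<dots> = (\<Sum>c\<in>C. gauss_binom q (n - rk q c) \<nu>)"
    by (rule sum.group) (auto simp: rkn)
  also have "\<dots> = (\<Sum>c\<in>C. real (PN (n - rk q c))) / Dv" by (simp add: gb sum_divide_distrib)
  also have "\<dots> = real (PN n * CARD('a) ^ (k - \<nu>)) / Dv" using mc by (simp flip: of_nat_sum)
  also have "\<dots> = real q ^ (m * (k - \<nu>)) * gauss_binom q n \<nu>"
    by (simp add: gb card_field power_mult)
  also have "real q ^ (m * (k - \<nu>)) = real q powi (int m * (int k - int \<nu>))"
  proof -
    have e: "int m * (int k - int \<nu>) = int (m * (k - \<nu>))" using mc by (simp add: of_nat_diff)
    show ?thesis by (simp only: e power_int_of_nat)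
  qed
  finally show ?thesis unfolding n_def .
qed

end
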